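(* For $i\in\{1,\dots,m\}$ let $f_i:\mathbb{R}^n\to\mathbb{R}\cup\{\infty\}$ be proper, lower semicontinuous, and prox-bounded with threshold $r_i$. Let $r>\max_i\{r_i\}$ and define $F(x,\lambda):=-\sum_{i=1}^m\lambda_ie_rf_i(x)$. Suppose $P_rf_i$ is single-valued and Lipschitz continuous for all $i$. Then, for any $(\bar x,\bar\lambda)$ and $\bar v\in\partial_xF(\bar x,\bar\lambda)$, the following hold: (1) $(0,\lambda')\in D^*(\partial_xF)(\bar x,\bar\lambda\,|\,\bar v)(0)\Rightarrow \lambda'=0$; (2) for some $\rho>0$, $(x',\lambda')\in D^*(\partial_xF)(\bar x,\bar\lambda\,|\,\bar v)(v')$ with $v'\neq 0$ implies $\langle x',v'\rangle>-\rho|v'|^2$; (3) the set-valued mapping $\partial_xF(\bar x,\cdot)$ has a continuous selection $g$ near $\bar\lambda$.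
   Context: Moreau envelope $e_rf(x)=\inf_y\{f(y)+\frac r2|y-x|^2\}$ and proximal mapping $P_rf(x)=\operatorname{argmin}_y\{f(y)+\frac r2|y-x|^2\}$. $f$ is prox-bounded if $e_rf(\bar x)>-\infty$ for some $r>0$ and $\bar x$; the infimum of such $r$ is the threshold. $\partial_x$ is the subdifferential in $x$, and $\partial_xF$ is regarded as the set-valued mapping $(x,\lambda)\mapsto\partial_xF(x,\lambda)$. For a set-valued mapping $S$ and $\bar y\in S(\bar z)$, the coderivative is $D^*S(\bar z|\bar y)(w)=\{z': (z',-w)\in N_{\operatorname{gph}S}(\bar z,\bar y)\}$, with $N$ the limiting normal cone. *)

theory Defs
  imports "HOL-Analysis.Analysis"
begin

(* Extended-real-valued functions f : R^n -> R \<union> {\<infinity>} are modelled as functions into ereal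
   that never take the value -\<infinity>. *)

definition proper_fun :: "('a \<Rightarrow> ereal) \<Rightarrow> bool" where
  "proper_fun f \<longleftrightarrow> (\<forall>x. f x \<noteq> -\<infinity>) \<and> (\<exists>x. f x < \<infinity>)"

definition lsc_fun :: "('a::topological_space \<Rightarrow> ereal) \<Rightarrow> bool" where
  "lsc_fun f \<longleftrightarrow> (\<forall>x. f x \<le> Liminf (at x) f)"

definition moreau_env :: "real \<Rightarrow> ('a::real_normed_vector \<Rightarrow> ereal) \<Rightarrow> 'a \<Rightarrow> ereal" where
  "moreau_env r f x = (INF y. f y + ereal (r / 2 * (norm (y - x))\<^sup>2))"

definition prox_map :: "real \<Rightarrow> ('a::real_normed_vector \<Rightarrow> ereal) \<Rightarrow> 'a \<Rightarrow> 'a set" where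
  "prox_map r f x = {y. \<forall>z. f y + ereal (r / 2 * (norm (y - x))\<^sup>2) \<le> f z + ereal (r / 2 * (norm (z - x))\<^sup>2)}"

definition prox_bounded :: "('a::real_normed_vector \<Rightarrow> ereal) \<Rightarrow> bool" where
  "prox_bounded f \<longleftrightarrow> (\<exists>r>0. \<exists>x. moreau_env r f x > -\<infinity>)"

definition prox_threshold :: "('a::real_normed_vector \<Rightarrow> ereal) \<Rightarrow> real" where
  "prox_threshold f = Inf {r. r > 0 \<and> (\<exists>x. moreau_env r f x > -\<infinity>)}"

definition regular_subdiff :: "('a::real_inner \<Rightarrow> real) \<Rightarrow> 'a \<Rightarrow> 'a set" where
  "regular_subdiff f x = {v. \<forall>e>0. \<exists>d>0. \<forall>y. norm (y - x) < d \<longrightarrow>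
      f y \<ge> f x + inner v (y - x) - e * norm (y - x)}"

definition subdiff :: "('a::real_inner \<Rightarrow> real) \<Rightarrow> 'a \<Rightarrow> 'a set" where
  "subdiff f x = {v. \<exists>xs vs. xs \<longlonglongrightarrow> x \<and> (\<lambda>k. f (xs k)) \<longlonglongrightarrow> f x \<and> vs \<longlonglongrightarrow> v \<and>
      (\<forall>k. vs k \<in> regular_subdiff f (xs k))}"

definition regular_normal_cone :: "'a::real_inner set \<Rightarrow> 'a \<Rightarrow> 'a set" where
  "regular_normal_cone C z = {w. z \<in> C \<and> (\<forall>e>0. \<exists>d>0. \<forall>z'\<in>C. norm (z' - z) < d \<longrightarrow>
      inner w (z' - z) \<le> e * norm (z' - z))}"

definition normal_cone :: "'a::real_inner set \<Rightarrow> 'a \<Rightarrow> 'a set" where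
  "normal_cone C z = {w. z \<in> C \<and> (\<exists>zs ws. (\<forall>k. zs k \<in> C) \<and> zs \<longlonglongrightarrow> z \<and> ws \<longlonglongrightarrow> w \<and>
      (\<forall>k. ws k \<in> regular_normal_cone C (zs k)))}"

definition graph_of :: "('a \<Rightarrow> 'b set) \<Rightarrow> ('a \<times> 'b) set" where
  "graph_of S = {(z, y). y \<in> S z}"

definition coderivative ::
  "('a::real_inner \<Rightarrow> 'b::real_inner set) \<Rightarrow> 'a \<Rightarrow> 'b \<Rightarrow> 'b \<Rightarrow> 'a set" where
  "coderivative S zbar ybar w = {z'. (z', - w) \<in> normal_cone (graph_of S) (zbar, ybar)}"

definition F_env :: "real \<Rightarrow> ('m::finite \<Rightarrow> real^'n \<Rightarrow> ereal) \<Rightarrow> real^'n \<Rightarrow> real^'m \<Rightarrow> real" where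
  "F_env r f x lam = - (\<Sum>i\<in>UNIV. lam $ i * real_of_ereal (moreau_env r (f i) x))"

definition partial_x_subdiff ::
  "(real^'n \<Rightarrow> real^'m \<Rightarrow> real) \<Rightarrow> ((real^'n) \<times> (real^'m)) \<Rightarrow> (real^'n) set" where
  "partial_x_subdiff F = (\<lambda>(x, lam). subdiff (\<lambda>y. F y lam) x)"

end

theory Submission imports Defs begin

lemma norm_sq_add: "(norm ((a::'a::real_inner) + b))\<^sup>2 = (norm a)\<^sup>2 + (norm b)\<^sup>2 + 2 * inner a b"
  using dot_norm[of a b] by simp

lemma env_eq:
  fixes f :: "'a::real_inner \<Rightarrow> ereal"
  assumes pr: "proper_fun f" and pm: "prox_map r f x = {q}"
  shows "moreau_env r f x = f q + ereal (r/2*(norm (q-x))\<^sup>2)" and "f q = ereal (real_of_ereal (f q))"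
proof -
  have q: "\<And>z. f q + ereal (r/2*(norm (q-x))\<^sup>2) \<le> f z + ereal (r/2*(norm (z-x))\<^sup>2)"
    using pm unfolding prox_map_def by auto
  show "moreau_env r f x = f q + ereal (r/2*(norm (q-x))\<^sup>2)"
    unfolding moreau_env_def
  proof (rule antisym)
    show "(INF y. f y + ereal (r / 2 * (norm (y - x))\<^sup>2)) \<le> f q + ereal (r / 2 * (norm (q - x))\<^sup>2)"
      by (rule INF_lower2[of q]) auto
    show "f q + ereal (r / 2 * (norm (q - x))\<^sup>2) \<le> (INF y. f y + ereal (r / 2 * (norm (y - x))\<^sup>2))"
      by (rule INF_greatest) (rule q)
  qed
  obtain z where z: "f z < \<infinity>" using pr unfolding proper_fun_def by auto
  have "f q \<noteq> \<infinity>"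
  proof
    assume "f q = \<infinity>"
    then have "\<infinity> \<le> f z + ereal (r/2*(norm (z-x))\<^sup>2)" using q[of z] by simp
    then show False using z by auto
  qed
  moreover have "f q \<noteq> -\<infinity>" using pr unfolding proper_fun_def by auto
  ultimately show "f q = ereal (real_of_ereal (f q))" by (cases "f q") auto
qed

lemma env_upper:
  fixes f :: "'a::real_inner \<Rightarrow> ereal"
  assumes pr: "proper_fun f" and pm: "\<And>x. prox_map r f x = {p x}"
  shows "real_of_ereal (moreau_env r f y) \<le> real_of_ereal (moreau_env r f x)
     + r * inner (x - p x) (y - x) + r/2 * (norm (y - x))\<^sup>2"
proof -
  define a where "a = real_of_ereal (f (p x))"
  have fa: "f (p x) = ereal a" using env_eq(2)[OF pr pm] a_def by simp
  have ex: "moreau_env r f x = ereal (a + r/2*(norm (p x-x))\<^sup>2)" using env_eq(1)[OF pr pm] fa by simp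
  have ey: "moreau_env r f y = ereal (real_of_ereal (moreau_env r f y))"
    using env_eq[OF pr pm, of y] by (cases "f (p y)") auto
  have "moreau_env r f y \<le> f (p x) + ereal (r/2*(norm (p x-y))\<^sup>2)"
    unfolding moreau_env_def by (rule INF_lower2[of "p x"]) auto
  then have le: "real_of_ereal (moreau_env r f y) \<le> a + r/2*(norm (p x-y))\<^sup>2"
    using fa ey by (metis ereal_less_eq(3) plus_ereal.simps(1))
  have "p x - y = (p x - x) + (x - y)" by simp
  then have "(norm (p x-y))\<^sup>2 = (norm (p x - x))\<^sup>2 + (norm (x-y))\<^sup>2 + 2 * inner (p x - x) (x - y)"
    using norm_sq_add by metis
  moreover have "inner (p x - x) (x - y) = inner (x - p x) (y - x)"
    by (metis inner_minus_left inner_minus_right minus_diff_eq)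
  moreover have "norm (x - y) = norm (y - x)" by (rule norm_minus_commute)
  ultimately have eq: "(norm (p x-y))\<^sup>2 = (norm (p x - x))\<^sup>2 + (norm (y-x))\<^sup>2 + 2 * inner (x - p x) (y - x)"
    by simp
  have rx: "real_of_ereal (moreau_env r f x) = a + r/2*(norm (p x-x))\<^sup>2" using ex by simp
  have "a + r/2*(norm (p x-y))\<^sup>2 = (a + r/2*(norm (p x-x))\<^sup>2) + r * inner (x - p x) (y - x) + r/2 * (norm (y - x))\<^sup>2"
    unfolding eq by (simp add: algebra_simps)
  then show ?thesis using le rx by linarith
qed

lemma env_quad:
  fixes f :: "'a::real_inner \<Rightarrow> ereal"
  assumes pr: "proper_fun f" and pm: "\<And>x. prox_map r f x = {p x}" and lip: "L-lipschitz_on UNIV p"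
  shows "\<bar>real_of_ereal (moreau_env r f y) - real_of_ereal (moreau_env r f x)
     - r * inner (x - p x) (y - x)\<bar> \<le> (\<bar>r\<bar>*(1+L) + \<bar>r\<bar>/2) * (norm (y - x))\<^sup>2"
proof -
  define Ey where "Ey = real_of_ereal (moreau_env r f y)"
  define Ex where "Ex = real_of_ereal (moreau_env r f x)"
  define D where "D = y - x"
  define W where "W = (y - p y) - (x - p x)"
  define N where "N = (norm D)\<^sup>2"
  have L0: "0 \<le> L" using lip by (rule lipschitz_on_nonneg)
  have N0: "0 \<le> N" unfolding N_def by simp
  have up1: "Ey \<le> Ex + r * inner (x - p x) D + r/2 * N"
    using env_upper[OF pr pm, of y x] unfolding Ey_def Ex_def D_def N_def .
  have up2: "Ex \<le> Ey + r * inner (y - p y) (x - y) + r/2 * N"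
    using env_upper[OF pr pm, of x y] unfolding Ey_def Ex_def D_def N_def by (simp add: norm_minus_commute)
  have "inner (y - p y) (x - y) = - inner (y - p y) D" unfolding D_def
    by (metis inner_minus_right minus_diff_eq)
  moreover have "inner W D = inner (y - p y) D - inner (x - p x) D" unfolding W_def by (rule inner_diff_left)
  ultimately have eqW: "- r * inner (y - p y) (x - y) - r * inner (x - p x) D = r * inner W D"
    by (simp only: right_diff_distrib mult_minus_right mult_minus_left minus_minus)
  have "W = D - (p y - p x)" unfolding W_def D_def by (simp add: algebra_simps)
  then have "norm W \<le> norm D + norm (p y - p x)" by (metis norm_triangle_ineq4)
  moreover have "norm (p y - p x) \<le> L * norm D"
    using lipschitz_onD[OF lip, of y x] unfolding D_def by (simp add: dist_norm)
  ultimately have nW: "norm W \<le> (1+L) * norm D" by (simp add: algebra_simps)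
  have "\<bar>inner W D\<bar> \<le> norm W * norm D" by (rule Cauchy_Schwarz_ineq2)
  also have "\<dots> \<le> (1+L) * norm D * norm D" using nW by (simp add: mult_right_mono)
  finally have "\<bar>inner W D\<bar> \<le> (1+L) * N" unfolding N_def by (simp add: power2_eq_square)
  then have "\<bar>r * inner W D\<bar> \<le> \<bar>r\<bar> * ((1+L) * N)"
    by (simp add: abs_mult mult_left_mono)
  moreover have "\<bar>r/2 * N\<bar> \<le> \<bar>r\<bar>/2 * N" using N0 by (simp add: abs_mult)
  moreover have "0 \<le> \<bar>r\<bar> * ((1+L) * N)" using N0 L0 by simp
  ultimately have "\<bar>Ey - Ex - r * inner (x - p x) D\<bar> \<le> \<bar>r\<bar> * ((1+L) * N) + \<bar>r\<bar>/2 * N"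
    using up1 up2 eqW by (simp add: abs_le_iff)
  then show ?thesis unfolding Ey_def Ex_def D_def N_def by (simp add: algebra_simps)
qed

lemma regular_subdiff_quad:
  fixes \<phi> :: "'a::real_inner \<Rightarrow> real"
  assumes q: "\<And>y. \<bar>\<phi> y - \<phi> x - inner g (y - x)\<bar> \<le> M * (norm (y - x))\<^sup>2"
  shows "regular_subdiff \<phi> x = {g}"
proof
  show "{g} \<subseteq> regular_subdiff \<phi> x"
  proof (clarsimp simp: regular_subdiff_def)
    fix e :: real assume e: "0 < e"
    define d where "d = e / (\<bar>M\<bar> + 1)"
    have d: "d > 0" using e unfolding d_def by simp
    have "\<forall>y. norm (y - x) < d \<longrightarrow> \<phi> x + inner g (y - x) - e * norm (y - x) \<le> \<phi> y"
    proof (intro allI impI)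
      fix y assume yd: "norm (y - x) < d"
      define n where "n = norm (y - x)"
      have n0: "0 \<le> n" unfolding n_def by simp
      have "M * n\<^sup>2 \<le> \<bar>M\<bar> * n * n"
        using mult_right_mono[OF abs_ge_self[of M], of "n*n"] by (simp add: power2_eq_square mult.assoc)
      also have "\<dots> \<le> (\<bar>M\<bar> + 1) * n * d"
        using yd n0 unfolding n_def[symmetric]
        by (intro mult_mono) auto
      also have "\<dots> = e * n" unfolding d_def by simp
      finally have "M * n\<^sup>2 \<le> e * n" .
      then show "\<phi> x + inner g (y - x) - e * norm (y - x) \<le> \<phi> y"
        using q[of y] unfolding n_def by (simp add: abs_le_iff)
    qed
    then show "\<exists>d>0. \<forall>y. norm (y - x) < d \<longrightarrow> \<phi> x + inner g (y - x) - e * norm (y - x) \<le> \<phi> y"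
      using d by blast
  qed
  show "regular_subdiff \<phi> x \<subseteq> {g}"
  proof (rule subsetI, rule ccontr)
    fix v assume v: "v \<in> regular_subdiff \<phi> x" and vg: "v \<notin> {g}"
    define u where "u = v - g"
    have u0: "norm u > 0" using vg unfolding u_def by simp
    define e where "e = norm u / 2"
    have "e > 0" using u0 unfolding e_def by simp
    then obtain d where d: "d > 0" and dd: "\<And>y. norm (y - x) < d \<Longrightarrow> \<phi> y \<ge> \<phi> x + inner v (y - x) - e * norm (y - x)"
      using v unfolding regular_subdiff_def by blast
    define t where "t = min (d / (2 * norm u)) (1 / (4 * (\<bar>M\<bar> + 1)))"
    have t0: "t > 0" unfolding t_def using d u0 by simp
    have "t * norm u \<le> d / (2 * norm u) * norm u" unfolding t_def using u0
      by (intro mult_right_mono) auto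
    also have "\<dots> = d / 2" using u0 by simp
    finally have "norm ((x + t *\<^sub>R u) - x) < d" using t0 d by simp
    then have lo: "\<phi> (x + t *\<^sub>R u) \<ge> \<phi> x + t * inner v u - e * (t * norm u)"
      using dd[of "x + t *\<^sub>R u"] t0 by simp
    have hi: "\<phi> (x + t *\<^sub>R u) \<le> \<phi> x + t * inner g u + M * (t * norm u)\<^sup>2"
      using q[of "x + t *\<^sub>R u"] t0 by (simp add: abs_le_iff)
    have "t * inner v u - t * inner g u = t * (norm u)\<^sup>2"
      unfolding u_def by (simp add: inner_diff_left algebra_simps power2_norm_eq_inner)
    then have "t * (norm u)\<^sup>2 \<le> e * (t * norm u) + M * (t * norm u)\<^sup>2" using lo hi by linarith
    then have "t * (norm u)\<^sup>2 \<le> t * ((norm u)\<^sup>2 / 2 + M * t * (norm u)\<^sup>2)"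
      unfolding e_def by (simp add: power2_eq_square algebra_simps)
    then have A: "(norm u)\<^sup>2 \<le> (norm u)\<^sup>2 / 2 + M * t * (norm u)\<^sup>2" using t0 by simp
    have "M * t \<le> \<bar>M\<bar> * t" using t0 by (simp add: mult_right_mono)
    also have "\<dots> \<le> \<bar>M\<bar> * (1 / (4 * (\<bar>M\<bar> + 1)))" unfolding t_def
      by (intro mult_left_mono) auto
    also have "\<dots> \<le> 1/4" by (simp add: field_simps)
    finally have "M * t * (norm u)\<^sup>2 \<le> 1/4 * (norm u)\<^sup>2" by (intro mult_right_mono) auto
    moreover have "(norm u)\<^sup>2 > 0" using u0 by simp
    ultimately show False using A by linarith
  qed
qed

lemma subdiff_quad:
  fixes \<phi> :: "'a::real_inner \<Rightarrow> real"
  assumes r: "\<And>x. regular_subdiff \<phi> x = {g x}" and c: "continuous_on UNIV g"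
  shows "subdiff \<phi> x = {g x}"
proof
  show "{g x} \<subseteq> subdiff \<phi> x"
  proof -
    have "(\<lambda>k::nat. x) \<longlonglongrightarrow> x \<and> (\<lambda>k. \<phi> ((\<lambda>k::nat. x) k)) \<longlonglongrightarrow> \<phi> x \<and> (\<lambda>k::nat. g x) \<longlonglongrightarrow> g x
       \<and> (\<forall>k. (\<lambda>k::nat. g x) k \<in> regular_subdiff \<phi> ((\<lambda>k::nat. x) k))" by (simp add: r)
    then have "g x \<in> subdiff \<phi> x" unfolding subdiff_def mem_Collect_eq
      by (rule exI[of _ "\<lambda>k::nat. x", OF exI[of _ "\<lambda>k::nat. g x"]])
    then show ?thesis by simp
  qed
  show "subdiff \<phi> x \<subseteq> {g x}"
  proof
    fix v assume "v \<in> subdiff \<phi> x"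
    then obtain xs vs where xs: "xs \<longlonglongrightarrow> x" and vs: "vs \<longlonglongrightarrow> v" and k: "\<forall>k. vs k \<in> regular_subdiff \<phi> (xs k)"
      unfolding subdiff_def by blast
    have "vs = (\<lambda>k. g (xs k))" using k r by auto
    moreover have "(\<lambda>k. g (xs k)) \<longlonglongrightarrow> g x"
      by (rule continuous_on_tendsto_compose[OF c xs]) auto
    ultimately have "v = g x" using vs LIMSEQ_unique by blast
    then show "v \<in> {g x}" by simp
  qed
qed

lemma reg_normal_bound:
  fixes Gf :: "'a::real_inner \<Rightarrow> 'b::real_inner" and K :: "'a \<Rightarrow> real"
  assumes K0: "\<And>z. K z \<ge> 0"
    and gb: "\<And>z d t. norm d = 1 \<Longrightarrow> 0 < t \<Longrightarrow> t \<le> 1 \<Longrightarrow> norm (Gf (z + t *\<^sub>R d) - Gf z) \<le> t * K z"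
    and S: "\<And>z. S z = {Gf z}"
    and n: "(a, c) \<in> regular_normal_cone (graph_of S) (z, y)"
  shows "norm a \<le> K z * norm c"
proof (cases "a = 0")
  case True then show ?thesis using K0[of z] by simp
next
  case False
  have gr: "\<And>u w. (u, w) \<in> graph_of S \<longleftrightarrow> w = Gf u" unfolding graph_of_def using S by auto
  have y: "y = Gf z" using n gr unfolding regular_normal_cone_def by auto
  have na: "norm a > 0" using False by simp
  define d where "d = (1 / norm a) *\<^sub>R a"
  have nd: "norm d = 1" unfolding d_def using na by simp
  have ad: "inner a d = norm a" unfolding d_def using na
    by (simp add: power2_norm_eq_inner[symmetric] power2_eq_square)
  have K1: "1 + K z > 0" using K0[of z] by linarith
  show ?thesis
  proof (rule field_le_epsilon)
    fix e :: real assume e: "0 < e"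
    define e' where "e' = e / (1 + K z)"
    have e': "e' > 0" unfolding e'_def using e K1 by simp
    then obtain \<delta> where \<delta>: "\<delta> > 0" and
      H: "\<And>z'. z' \<in> graph_of S \<Longrightarrow> norm (z' - (z, y)) < \<delta> \<Longrightarrow> inner (a, c) (z' - (z, y)) \<le> e' * norm (z' - (z, y))"
      using n unfolding regular_normal_cone_def by blast
    define t where "t = min 1 (\<delta> / (2 * (1 + K z)))"
    have t0: "t > 0" and t1: "t \<le> 1" unfolding t_def using \<delta> K1 by auto
    have tK: "t * (1 + K z) \<le> \<delta> / 2"
    proof -
      have "t * (1 + K z) \<le> \<delta> / (2 * (1 + K z)) * (1 + K z)"
        unfolding t_def using K1 by (intro mult_right_mono) auto
      also have "\<dots> = \<delta> / 2" using K1 by (simp add: field_simps)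
      finally show ?thesis .
    qed
    define dG where "dG = Gf (z + t *\<^sub>R d) - Gf z"
    have ndG: "norm dG \<le> t * K z" unfolding dG_def using gb[OF nd t0 t1] .
    define z' where "z' = (z + t *\<^sub>R d, Gf (z + t *\<^sub>R d))"
    have z'g: "z' \<in> graph_of S" unfolding z'_def using gr by simp
    have dz: "z' - (z, y) = (t *\<^sub>R d, dG)" unfolding z'_def dG_def y by simp
    have "norm (z' - (z, y)) \<le> norm (t *\<^sub>R d) + norm dG" unfolding dz by (rule norm_Pair_le)
    also have "\<dots> \<le> t + t * K z" using ndG nd t0 by simp
    finally have nz: "norm (z' - (z, y)) \<le> t * (1 + K z)" by (simp add: algebra_simps)
    then have "norm (z' - (z, y)) < \<delta>" using tK \<delta> by linarith
    from H[OF z'g this] have "inner (a, c) (z' - (z, y)) \<le> e' * norm (z' - (z, y))" .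
    also have "\<dots> \<le> e' * (t * (1 + K z))" using nz e' by (intro mult_left_mono) auto
    also have "\<dots> = t * e" unfolding e'_def using K1 by simp
    finally have I: "t * norm a + inner c dG \<le> t * e" unfolding dz using ad by simp
    have "- inner c dG \<le> norm c * norm dG"
      by (metis Cauchy_Schwarz_ineq2 abs_le_iff)
    also have "\<dots> \<le> norm c * (t * K z)" using ndG by (intro mult_left_mono) auto
    finally have "t * norm a \<le> t * (K z * norm c + e)" using I by (simp add: algebra_simps)
    then show "norm a \<le> K z * norm c + e" using t0 by simp
  qed
qed

lemma normal_bound:
  fixes Gf :: "'a::real_inner \<Rightarrow> 'b::real_inner" and K :: "'a \<Rightarrow> real"
  assumes K0: "\<And>z. K z \<ge> 0"
    and Kc: "continuous_on UNIV K"
    and gb: "\<And>z d t. norm d = 1 \<Longrightarrow> 0 < t \<Longrightarrow> t \<le> 1 \<Longrightarrow> norm (Gf (z + t *\<^sub>R d) - Gf z) \<le> t * K z"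
    and S: "\<And>z. S z = {Gf z}"
    and n: "(a, c) \<in> normal_cone (graph_of S) (zb, yb)"
  shows "norm a \<le> K zb * norm c"
proof -
  obtain zs ws where zs: "\<forall>k. zs k \<in> graph_of S" and zl: "zs \<longlonglongrightarrow> (zb, yb)" and wl: "ws \<longlonglongrightarrow> (a, c)"
    and wk: "\<forall>k. ws k \<in> regular_normal_cone (graph_of S) (zs k)"
    using n unfolding normal_cone_def by blast
  have b: "norm (fst (ws k)) \<le> K (fst (zs k)) * norm (snd (ws k))" for k
  proof -
    have "(fst (ws k), snd (ws k)) \<in> regular_normal_cone (graph_of S) (fst (zs k), snd (zs k))"
      using wk by simp
    then show ?thesis using reg_normal_bound[of K Gf S, OF K0 gb S] by blast
  qed
  have l1: "(\<lambda>k. norm (fst (ws k))) \<longlonglongrightarrow> norm a"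
    using tendsto_norm[OF tendsto_fst[OF wl]] by simp
  have zf: "(\<lambda>k. fst (zs k)) \<longlonglongrightarrow> zb" using tendsto_fst[OF zl] by simp
  have "(\<lambda>k. K (fst (zs k))) \<longlonglongrightarrow> K zb"
    by (rule continuous_on_tendsto_compose[OF Kc zf]) auto
  moreover have "(\<lambda>k. norm (snd (ws k))) \<longlonglongrightarrow> norm c"
    using tendsto_norm[OF tendsto_snd[OF wl]] by simp
  ultimately have l2: "(\<lambda>k. K (fst (zs k)) * norm (snd (ws k))) \<longlonglongrightarrow> K zb * norm c"
    by (rule tendsto_mult)
  show ?thesis using l1 l2 b by (intro LIMSEQ_le[OF l1 l2]) auto
qed

lemma term_bound:
  fixes h :: "'a::real_normed_vector \<Rightarrow> 'b::real_normed_vector"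
  assumes hl: "\<And>a b. norm (h a - h b) \<le> M * norm (a - b)" and M0: "M \<ge> 0"
    and dx: "norm dx \<le> 1" and dl: "\<bar>dl\<bar> \<le> 1" and t0: "0 < t" and t1: "t \<le> 1"
  shows "norm (((lam + t * dl) * r) *\<^sub>R h (x + t *\<^sub>R dx) - (lam * r) *\<^sub>R h x)
          \<le> t * (\<bar>r\<bar> * (\<bar>lam\<bar> * M + norm (h x) + M))"
proof -
  define A where "A = (lam * r) *\<^sub>R (h (x + t *\<^sub>R dx) - h x)"
  define B where "B = (t * dl * r) *\<^sub>R h (x + t *\<^sub>R dx)"
  have eq: "((lam + t * dl) * r) *\<^sub>R h (x + t *\<^sub>R dx) - (lam * r) *\<^sub>R h x = A + B"
    unfolding A_def B_def by (simp add: algebra_simps)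
  have hd: "norm (h (x + t *\<^sub>R dx) - h x) \<le> M * t"
  proof -
    have "norm (h (x + t *\<^sub>R dx) - h x) \<le> M * norm (t *\<^sub>R dx)" using hl[of "x + t *\<^sub>R dx" x] by simp
    also have "\<dots> \<le> M * t" using M0 dx t0 by (simp add: mult_left_mono mult_left_le)
    finally show ?thesis .
  qed
  have nA: "norm A \<le> \<bar>lam\<bar> * \<bar>r\<bar> * (M * t)"
    unfolding A_def using hd by (simp add: abs_mult mult_left_mono)
  have "norm (h (x + t *\<^sub>R dx)) \<le> norm (h x) + M * t"
    using hd norm_triangle_ineq2[of "h (x + t *\<^sub>R dx)" "h x"] by linarith
  also have "\<dots> \<le> norm (h x) + M" using M0 t1 by (simp add: mult_left_le)
  finally have hn: "norm (h (x + t *\<^sub>R dx)) \<le> norm (h x) + M" .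
  have "norm B = t * \<bar>dl\<bar> * \<bar>r\<bar> * norm (h (x + t *\<^sub>R dx))" unfolding B_def using t0 by (simp add: abs_mult)
  also have "\<dots> \<le> t * 1 * \<bar>r\<bar> * (norm (h x) + M)"
    using t0 dl hn by (intro mult_mono) auto
  finally have nB: "norm B \<le> t * \<bar>r\<bar> * (norm (h x) + M)" by simp
  have "norm (A + B) \<le> norm A + norm B" by (rule norm_triangle_ineq)
  also have "\<dots> \<le> t * (\<bar>r\<bar> * (\<bar>lam\<bar> * M + norm (h x) + M))" using nA nB by (simp add: algebra_simps)
  finally show ?thesis unfolding eq .
qed

theorem mainTheorem3:
  fixes f :: "'m::finite \<Rightarrow> real^'n \<Rightarrow> ereal"
    and r :: real
    and xbar :: "real^'n" and lbar :: "real^'m" and vbar :: "real^'n"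
  assumes proper: "\<forall>i. proper_fun (f i)"
    and lsc: "\<forall>i. lsc_fun (f i)"
    and pb: "\<forall>i. prox_bounded (f i)"
    and r_gt: "r > Max (range (\<lambda>i. prox_threshold (f i)))"
    and prox_sv_lip: "\<forall>i. \<exists>p L. (\<forall>x. prox_map r (f i) x = {p x}) \<and> L-lipschitz_on UNIV p"
    and vbar: "vbar \<in> partial_x_subdiff (F_env r f) (xbar, lbar)"
  shows "(\<forall>l'. (0, l') \<in> coderivative (partial_x_subdiff (F_env r f)) (xbar, lbar) vbar 0
              \<longrightarrow> l' = 0)
       \<and> (\<exists>\<rho>>0. \<forall>x' l' v'. v' \<noteq> 0 \<and>
              (x', l') \<in> coderivative (partial_x_subdiff (F_env r f)) (xbar, lbar) vbar v'
              \<longrightarrow> inner x' v' > - \<rho> * (norm v')\<^sup>2)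
       \<and> (\<exists>U g. open U \<and> lbar \<in> U \<and> continuous_on U g \<and>
              (\<forall>l\<in>U. g l \<in> partial_x_subdiff (F_env r f) (xbar, l)))"
proof -
  have "\<forall>i. \<exists>pL. (\<forall>x. prox_map r (f i) x = {fst pL x}) \<and> (snd pL)-lipschitz_on UNIV (fst pL)"
    using prox_sv_lip by auto
  then have "\<exists>g. \<forall>i. (\<forall>x. prox_map r (f i) x = {fst (g i) x}) \<and> (snd (g i))-lipschitz_on UNIV (fst (g i))"
    by (rule choice)
  then obtain g where g: "\<forall>i. (\<forall>x. prox_map r (f i) x = {fst (g i) x}) \<and> (snd (g i))-lipschitz_on UNIV (fst (g i))"
    by blast
  define P where "P i = fst (g i)" for i
  define Lc where "Lc i = snd (g i)" for i
  have PL: "\<And>i. (\<forall>x. prox_map r (f i) x = {P i x}) \<and> (Lc i)-lipschitz_on UNIV (P i)"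
    using g unfolding P_def Lc_def by blast
  have pm: "\<And>i x. prox_map r (f i) x = {P i x}" using PL by blast
  have lip: "\<And>i. (Lc i)-lipschitz_on UNIV (P i)" using PL by blast
  have L0: "\<And>i. Lc i \<ge> 0" using lip lipschitz_on_nonneg by blast
  have contP: "\<And>i. continuous_on UNIV (P i)" using lip lipschitz_on_continuous_on by blast
  have pr: "\<And>i. proper_fun (f i)" using proper by blast
  define E where "E i x = real_of_ereal (moreau_env r (f i) x)" for i x
  define C where "C i = \<bar>r\<bar>*(1+Lc i) + \<bar>r\<bar>/2" for i
  define Gx :: "real^'n \<Rightarrow> real^'m \<Rightarrow> real^'n"
    where "Gx x l = - (\<Sum>i\<in>UNIV. (l$i * r) *\<^sub>R (x - P i x))" for x l
  have Fe: "F_env r f x l = - (\<Sum>i\<in>UNIV. l $ i * E i x)" for x l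
    unfolding F_env_def E_def by simp
  have quadE: "\<bar>E i y - E i x - r * inner (x - P i x) (y - x)\<bar> \<le> C i * (norm (y - x))\<^sup>2" for i x y
    unfolding E_def C_def by (rule env_quad[OF pr pm lip])
  have quadF: "\<bar>F_env r f y l - F_env r f x l - inner (Gx x l) (y - x)\<bar>
      \<le> (\<Sum>i\<in>UNIV. \<bar>l$i\<bar> * C i) * (norm (y - x))\<^sup>2" for x y l
  proof -
    have eqn: "F_env r f y l - F_env r f x l - inner (Gx x l) (y - x)
        = - (\<Sum>i\<in>UNIV. l$i * (E i y - E i x - r * inner (x - P i x) (y - x)))"
      unfolding Fe Gx_def
      apply (simp add: inner_sum_left sum_subtractf[symmetric] algebra_simps)
      apply (subst sum_negf[symmetric])
      apply (rule sum.cong)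
       apply (simp_all add: algebra_simps)
      done
    have "\<bar>F_env r f y l - F_env r f x l - inner (Gx x l) (y - x)\<bar>
       \<le> (\<Sum>i\<in>UNIV. \<bar>l$i * (E i y - E i x - r * inner (x - P i x) (y - x))\<bar>)"
      unfolding eqn abs_minus_cancel by (rule sum_abs)
    also have "\<dots> \<le> (\<Sum>i\<in>UNIV. \<bar>l$i\<bar> * C i * (norm (y - x))\<^sup>2)"
      by (intro sum_mono) (simp add: abs_mult mult.assoc mult_left_mono quadE)
    also have "\<dots> = (\<Sum>i\<in>UNIV. \<bar>l$i\<bar> * C i) * (norm (y - x))\<^sup>2"
      by (simp add: sum_distrib_right)
    finally show ?thesis .
  qed
  have contG: "continuous_on UNIV (\<lambda>x. Gx x l)" for l
    unfolding Gx_def by (intro continuous_intros contP)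
  have sub: "partial_x_subdiff (F_env r f) (x, l) = {Gx x l}" for x l
  proof -
    have "regular_subdiff (\<lambda>y. F_env r f y l) x' = {Gx x' l}" for x'
      by (rule regular_subdiff_quad[OF quadF])
    then show ?thesis unfolding partial_x_subdiff_def
      using subdiff_quad[OF _ contG] by simp
  qed
  define Gz where "Gz z = Gx (fst z) (snd z)" for z
  have S: "partial_x_subdiff (F_env r f) z = {Gz z}" for z
    unfolding Gz_def using sub by (cases z) simp
  define K where "K z = \<bar>r\<bar> * (\<Sum>i\<in>UNIV. \<bar>snd z $ i\<bar> * (1 + Lc i) + norm (fst z - P i (fst z)) + (1 + Lc i))" for z
  have K0: "K z \<ge> 0" for z
    unfolding K_def using L0 by (intro mult_nonneg_nonneg sum_nonneg) (auto intro!: add_nonneg_nonneg)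
  have Kc: "continuous_on UNIV K"
    unfolding K_def by (intro continuous_intros continuous_on_compose2[OF contP]) auto
  have gb: "norm (Gz (z + t *\<^sub>R d) - Gz z) \<le> t * K z" if nd: "norm d = 1" and t0: "0 < t" and t1: "t \<le> 1" for z d t
  proof -
    obtain x l where z: "z = (x, l)" by (cases z)
    obtain dx dl where d: "d = (dx, dl)" by (cases d)
    have ndx: "norm dx \<le> 1" using nd norm_fst_le[of dx dl] d by simp
    have ndl: "\<bar>dl $ i\<bar> \<le> 1" for i using nd norm_snd_le[of dl dx] d component_le_norm_cart[of dl i] by simp
    have hl: "norm ((a - P i a) - (b - P i b)) \<le> (1 + Lc i) * norm (a - b)" for i a b
    proof -
      have "(a - P i a) - (b - P i b) = (a - b) - (P i a - P i b)" by (simp add: algebra_simps)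
      then have "norm ((a - P i a) - (b - P i b)) \<le> norm (a - b) + norm (P i a - P i b)"
        using norm_triangle_ineq4 by metis
      also have "norm (P i a - P i b) \<le> Lc i * norm (a - b)"
        using lipschitz_onD[OF lip, of a b] by (simp add: dist_norm)
      finally show ?thesis by (simp add: algebra_simps)
    qed
    have eqG: "Gz (z + t *\<^sub>R d) - Gz z = - (\<Sum>i\<in>UNIV. ((l$i + t * dl$i) * r) *\<^sub>R ((x + t *\<^sub>R dx) - P i (x + t *\<^sub>R dx)) - (l$i * r) *\<^sub>R (x - P i x))"
      unfolding Gz_def Gx_def z d by (simp add: sum_subtractf)
    have "norm (Gz (z + t *\<^sub>R d) - Gz z) \<le> (\<Sum>i\<in>UNIV. norm (((l$i + t * dl$i) * r) *\<^sub>R ((x + t *\<^sub>R dx) - P i (x + t *\<^sub>R dx)) - (l$i * r) *\<^sub>R (x - P i x)))"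
      unfolding eqG norm_minus_cancel by (rule norm_sum)
    also have "\<dots> \<le> (\<Sum>i\<in>UNIV. t * (\<bar>r\<bar> * (\<bar>l$i\<bar> * (1 + Lc i) + norm (x - P i x) + (1 + Lc i))))"
    proof (rule sum_mono)
      fix i
      show "norm (((l$i + t * dl$i) * r) *\<^sub>R ((x + t *\<^sub>R dx) - P i (x + t *\<^sub>R dx)) - (l$i * r) *\<^sub>R (x - P i x))
         \<le> t * (\<bar>r\<bar> * (\<bar>l$i\<bar> * (1 + Lc i) + norm (x - P i x) + (1 + Lc i)))"
        using term_bound[where h="\<lambda>a. a - P i a", OF hl _ ndx ndl t0 t1] L0[of i] by simp
    qed
    also have "\<dots> = t * K z" unfolding K_def z by (simp add: sum_distrib_left)
    finally show ?thesis .
  qed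
  have NB: "norm z' \<le> K (xbar, lbar) * norm w"
    if "z' \<in> coderivative (partial_x_subdiff (F_env r f)) (xbar, lbar) vbar w" for z' w
  proof -
    have "(z', - w) \<in> normal_cone (graph_of (partial_x_subdiff (F_env r f))) ((xbar, lbar), vbar)"
      using that unfolding coderivative_def by simp
    from normal_bound[OF K0 Kc gb S this] show ?thesis by simp
  qed
  have P1: "\<forall>l'. (0, l') \<in> coderivative (partial_x_subdiff (F_env r f)) (xbar, lbar) vbar 0 \<longrightarrow> l' = 0"
  proof (intro allI impI)
    fix l' assume "(0, l') \<in> coderivative (partial_x_subdiff (F_env r f)) (xbar, lbar) vbar 0"
    from NB[OF this] have "norm ((0::real^'n), l') \<le> 0" by simp
    then show "l' = 0" using norm_snd_le[of "0::real^'n" l'] by simp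
  qed
  have P2: "\<exists>\<rho>>0. \<forall>x' l' v'. v' \<noteq> 0 \<and>
              (x', l') \<in> coderivative (partial_x_subdiff (F_env r f)) (xbar, lbar) vbar v'
              \<longrightarrow> inner x' v' > - \<rho> * (norm v')\<^sup>2"
  proof (intro exI[of _ "K (xbar, lbar) + 1"] conjI allI impI)
    show "K (xbar, lbar) + 1 > 0" using K0[of "(xbar, lbar)"] by linarith
    fix x' l' v' assume a: "v' \<noteq> 0 \<and> (x', l') \<in> coderivative (partial_x_subdiff (F_env r f)) (xbar, lbar) vbar v'"
    have n1: "norm (x', l') \<le> K (xbar, lbar) * norm v'" using NB a by blast
    have "- inner x' v' \<le> norm x' * norm v'" by (metis Cauchy_Schwarz_ineq2 abs_le_iff)
    also have "\<dots> \<le> norm (x', l') * norm v'" by (intro mult_right_mono norm_fst_le) auto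
    also have "\<dots> \<le> K (xbar, lbar) * norm v' * norm v'" by (intro mult_right_mono n1) auto
    finally have "- inner x' v' \<le> K (xbar, lbar) * (norm v')\<^sup>2" by (simp add: power2_eq_square mult.assoc)
    moreover have "(norm v')\<^sup>2 > 0" using a by simp
    ultimately have "inner x' v' > - (K (xbar, lbar) * (norm v')\<^sup>2) - (norm v')\<^sup>2" by linarith
    then show "inner x' v' > - (K (xbar, lbar) + 1) * (norm v')\<^sup>2" by (simp add: algebra_simps)
  qed
  have P3: "\<exists>U g. open U \<and> lbar \<in> U \<and> continuous_on U g \<and>
              (\<forall>l\<in>U. g l \<in> partial_x_subdiff (F_env r f) (xbar, l))"
  proof (intro exI[of _ UNIV] exI[of _ "\<lambda>l. Gx xbar l"] conjI)
    show "continuous_on UNIV (\<lambda>l. Gx xbar l)" unfolding Gx_def by (intro continuous_intros)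
    show "\<forall>l\<in>UNIV. Gx xbar l \<in> partial_x_subdiff (F_env r f) (xbar, l)" using sub by simp
  qed auto
  show ?thesis using P1 P2 P3 by blast
qed

end
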